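(* Let $G$ be a nonabelian torsion-free nilpotent group with an involution $\ast$. Then $G$ contains a $\ast$-invariant Heisenberg subgroup; more precisely, there exist $x,y\in G$ such that $[x,y]\neq1$, $[x,[x,y]]=[y,[x,y]]=1$, $x^\ast\in\{x,x^{-1}\}$ and $y^\ast\in\{y,y^{-1}\}$.
   Context: An involution on a group is an anti-automorphism of order $2$. Commutators are $[x,y]=x^{-1}y^{-1}xy$. *)

theory Defs
  imports "HOL-Algebra.Algebra"
begin

definition comm :: "('a, 'b) monoid_scheme \<Rightarrow> 'a \<Rightarrow> 'a \<Rightarrow> 'a" where
  "comm G x y = inv\<^bsub>G\<^esub> x \<otimes>\<^bsub>G\<^esub> inv\<^bsub>G\<^esub> y \<otimes>\<^bsub>G\<^esub> x \<otimes>\<^bsub>G\<^esub> y"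

text \<open>Lower central series: gamma_1 = G, gamma_{i+1} = [G, gamma_i]
  (the subgroup generated by commutators). Index 0 here is gamma_1.\<close>
fun lower_central :: "('a, 'b) monoid_scheme \<Rightarrow> nat \<Rightarrow> 'a set" where
  "lower_central G 0 = carrier G"
| "lower_central G (Suc n) =
     generate G {comm G g h | g h. g \<in> carrier G \<and> h \<in> lower_central G n}"

definition nilpotent_group :: "('a, 'b) monoid_scheme \<Rightarrow> bool" where
  "nilpotent_group G \<longleftrightarrow> group G \<and> (\<exists>n. lower_central G n = {\<one>\<^bsub>G\<^esub>})"

definition torsion_free_group :: "('a, 'b) monoid_scheme \<Rightarrow> bool" where
  "torsion_free_group G \<longleftrightarrow> group G \<and>
     (\<forall>x \<in> carrier G. \<forall>n::nat. n > 0 \<longrightarrow> x [^]\<^bsub>G\<^esub> n = \<one>\<^bsub>G\<^esub> \<longrightarrow> x = \<one>\<^bsub>G\<^esub>)"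

definition involution :: "('a, 'b) monoid_scheme \<Rightarrow> ('a \<Rightarrow> 'a) \<Rightarrow> bool" where
  "involution G s \<longleftrightarrow>
     s \<in> carrier G \<rightarrow> carrier G \<and>
     bij_betw s (carrier G) (carrier G) \<and>
     (\<forall>x \<in> carrier G. \<forall>y \<in> carrier G. s (x \<otimes>\<^bsub>G\<^esub> y) = s y \<otimes>\<^bsub>G\<^esub> s x) \<and>
     (\<forall>x \<in> carrier G. s (s x) = x) \<and>
     (\<exists>x \<in> carrier G. s x \<noteq> x)"

end

theory Submission
  imports Defs
begin


context group begin

definition cent :: "'a \<Rightarrow> bool" where
  "cent z \<longleftrightarrow> z \<in> carrier G \<and> (\<forall>g\<in>carrier G. g \<otimes> z = z \<otimes> g)"

lemma canc1[simp]: "x \<in> carrier G \<Longrightarrow> y \<in> carrier G \<Longrightarrow> x \<otimes> (inv x \<otimes> y) = y"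
  by (simp add: m_assoc[symmetric])
lemma canc2[simp]: "x \<in> carrier G \<Longrightarrow> y \<in> carrier G \<Longrightarrow> inv x \<otimes> (x \<otimes> y) = y"
  by (simp add: m_assoc[symmetric])

lemma prod_one_inv: "x \<in> carrier G \<Longrightarrow> y \<in> carrier G \<Longrightarrow> x \<otimes> y = \<one> \<Longrightarrow> y = inv x"
  using inv_equality[OF inv_comm] by simp

lemma comm_closed[simp]: "x \<in> carrier G \<Longrightarrow> y \<in> carrier G \<Longrightarrow> comm G x y \<in> carrier G"
  by (simp add: comm_def)

lemma comm_one_iff: "x \<in> carrier G \<Longrightarrow> y \<in> carrier G \<Longrightarrow> comm G x y = \<one> \<longleftrightarrow> x \<otimes> y = y \<otimes> x"
proof -
  assume x: "x \<in> carrier G" and y: "y \<in> carrier G"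
  have "comm G x y = inv (y \<otimes> x) \<otimes> (x \<otimes> y)"
    by (simp add: comm_def inv_mult_group x y m_assoc)
  also have "\<dots> = \<one> \<longleftrightarrow> x \<otimes> y = y \<otimes> x"
    using x y inv_solve_left'[of "\<one>" "y \<otimes> x" "x \<otimes> y"] by simp
  finally show ?thesis .
qed

lemma cent_commute: "cent z \<Longrightarrow> g \<in> carrier G \<Longrightarrow> g \<otimes> z = z \<otimes> g"
  by (simp add: cent_def)
lemma cent_carrier: "cent z \<Longrightarrow> z \<in> carrier G"
  by (simp add: cent_def)

lemma cent_comm_one: "cent z \<Longrightarrow> g \<in> carrier G \<Longrightarrow> comm G g z = \<one>"
  by (simp add: cent_def comm_one_iff)

lemma cent_mult: "cent a \<Longrightarrow> cent b \<Longrightarrow> cent (a \<otimes> b)"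
  unfolding cent_def by (metis m_assoc m_closed)

lemma cent_inv: "cent a \<Longrightarrow> cent (inv a)"
proof -
  assume c: "cent a"
  have a: "a \<in> carrier G" using c by (simp add: cent_def)
  { fix g assume g: "g \<in> carrier G"
    have "inv a \<otimes> (g \<otimes> a) \<otimes> inv a = inv a \<otimes> (a \<otimes> g) \<otimes> inv a" using c g by (simp add: cent_def)
    hence "g \<otimes> inv a = inv a \<otimes> g" using a g by (simp add: m_assoc) }
  thus ?thesis using a by (simp add: cent_def)
qed

lemma cent_one: "cent \<one>" by (simp add: cent_def)

lemma comm_mult_left:
  assumes x: "x \<in> carrier G" and z: "z \<in> carrier G" and y: "y \<in> carrier G"
    and c: "cent (comm G x y)"
  shows "comm G (x \<otimes> z) y = comm G x y \<otimes> comm G z y"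
proof -
  have "comm G (x \<otimes> z) y = inv z \<otimes> (comm G x y \<otimes> (inv y \<otimes> z \<otimes> y))"
    using x y z by (simp add: comm_def inv_mult_group m_assoc)
  also have "\<dots> = inv z \<otimes> (inv y \<otimes> z \<otimes> y \<otimes> comm G x y)"
    using cent_commute[OF c, of "inv y \<otimes> z \<otimes> y"] x y z by simp
  also have "\<dots> = comm G z y \<otimes> comm G x y"
    using x y z by (simp add: comm_def m_assoc)
  also have "\<dots> = comm G x y \<otimes> comm G z y"
    using cent_commute[OF c, of "comm G z y"] x y z by simp
  finally show ?thesis .
qed

lemma comm_mult_right:
  assumes g: "g \<in> carrier G" and a: "a \<in> carrier G" and b: "b \<in> carrier G"
    and c: "cent (comm G g a)"
  shows "comm G g (a \<otimes> b) = comm G g a \<otimes> comm G g b"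
proof -
  have "comm G g (a \<otimes> b) = (inv g \<otimes> inv b \<otimes> g) \<otimes> comm G g a \<otimes> b"
    using g a b by (simp add: comm_def inv_mult_group m_assoc)
  also have "\<dots> = comm G g a \<otimes> (inv g \<otimes> inv b \<otimes> g) \<otimes> b"
    using cent_commute[OF c, of "inv g \<otimes> inv b \<otimes> g"] g a b by simp
  also have "\<dots> = comm G g a \<otimes> comm G g b"
    using g a b by (simp add: comm_def m_assoc)
  finally show ?thesis .
qed

lemma comm_inv_right:
  assumes g: "g \<in> carrier G" and a: "a \<in> carrier G"
    and c: "cent (comm G g a)"
  shows "comm G g (inv a) = inv (comm G g a)"
proof -
  have "comm G g (a \<otimes> inv a) = comm G g a \<otimes> comm G g (inv a)"
    using comm_mult_right[OF g a _ c] a by blast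
  moreover have "comm G g (a \<otimes> inv a) = \<one>" using g a by (simp add: comm_def m_assoc)
  ultimately show ?thesis using g a prod_one_inv[of "comm G g a" "comm G g (inv a)"] by simp
qed

end



primrec iter :: "('a \<Rightarrow> 'a) \<Rightarrow> ('a, 'b) monoid_scheme \<Rightarrow> 'a \<Rightarrow> nat \<Rightarrow> 'a" where
  "iter f G g 0 = g"
| "iter f G g (Suc k) = iter f G g k \<otimes>\<^bsub>G\<^esub> f (iter f G g k)"

locale invo = group G for G (structure) +
  fixes s :: "'a \<Rightarrow> 'a"
  assumes s_closed[simp]: "x \<in> carrier G \<Longrightarrow> s x \<in> carrier G"
    and s_mult: "x \<in> carrier G \<Longrightarrow> y \<in> carrier G \<Longrightarrow> s (x \<otimes> y) = s y \<otimes> s x"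
    and s_s[simp]: "x \<in> carrier G \<Longrightarrow> s (s x) = x"
begin

lemma s_one[simp]: "s \<one> = \<one>"
proof -
  have "s \<one> \<otimes> s \<one> = s \<one>" using s_mult[of \<one> \<one>] by simp
  thus ?thesis using l_cancel_one[of "s \<one>" "s \<one>"] by simp
qed

lemma s_inv[simp]: "x \<in> carrier G \<Longrightarrow> s (inv x) = inv (s x)"
proof -
  assume x: "x \<in> carrier G"
  have "s (inv x) \<otimes> s x = \<one>" using s_mult[of x "inv x"] x by simp
  thus ?thesis using inv_equality[of "s (inv x)" "s x"] x by simp
qed

definition sig :: "'a \<Rightarrow> 'a" where "sig x = inv (s x)"

lemma sig_closed[simp]: "x \<in> carrier G \<Longrightarrow> sig x \<in> carrier G"
  by (simp add: sig_def)

lemma sig_mult: "x \<in> carrier G \<Longrightarrow> y \<in> carrier G \<Longrightarrow> sig (x \<otimes> y) = sig x \<otimes> sig y"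
  by (simp add: sig_def s_mult inv_mult_group)

lemma sig_sig[simp]: "x \<in> carrier G \<Longrightarrow> sig (sig x) = x"
  by (simp add: sig_def)

lemma sig_inv: "x \<in> carrier G \<Longrightarrow> sig (inv x) = inv (sig x)"
  by (simp add: sig_def)

lemma sig_one[simp]: "sig \<one> = \<one>" by (simp add: sig_def)

lemma s_eq: "x \<in> carrier G \<Longrightarrow> s x = inv (sig x)"
  by (simp add: sig_def)

lemma sig_comm: "x \<in> carrier G \<Longrightarrow> y \<in> carrier G \<Longrightarrow> sig (comm G x y) = comm G (sig x) (sig y)"
  by (simp add: comm_def sig_mult sig_inv)

lemma cent_sig: "cent z \<Longrightarrow> cent (sig z)"
proof -
  assume c: "cent z"
  have z: "z \<in> carrier G" using c by (simp add: cent_def)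
  { fix g assume g: "g \<in> carrier G"
    have "g \<otimes> sig z = sig (sig g \<otimes> z)" using g z by (simp add: sig_mult)
    also have "\<dots> = sig (z \<otimes> sig g)" using cent_commute[OF c, of "sig g"] g by simp
    also have "\<dots> = sig z \<otimes> g" using g z by (simp add: sig_mult)
    finally have "g \<otimes> sig z = sig z \<otimes> g" . }
  thus ?thesis using z by (simp add: cent_def)
qed

definition z2 :: "'a \<Rightarrow> bool" where
  "z2 y \<longleftrightarrow> y \<in> carrier G \<and> (\<forall>g\<in>carrier G. cent (comm G g y))"

lemma z2_carrier: "z2 y \<Longrightarrow> y \<in> carrier G" by (simp add: z2_def)

lemma z2_cent: "z2 y \<Longrightarrow> g \<in> carrier G \<Longrightarrow> cent (comm G g y)" by (simp add: z2_def)

lemma z2_sig: "z2 y \<Longrightarrow> z2 (sig y)"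
proof -
  assume y: "z2 y"
  { fix g assume g: "g \<in> carrier G"
    have "comm G g (sig y) = sig (comm G (sig g) y)"
      using g z2_carrier[OF y] by (simp add: sig_comm)
    hence "cent (comm G g (sig y))" using cent_sig z2_cent[OF y, of "sig g"] g by simp }
  thus ?thesis using z2_carrier[OF y] by (simp add: z2_def)
qed

lemma z2_mult: "z2 a \<Longrightarrow> z2 b \<Longrightarrow> z2 (a \<otimes> b)"
proof -
  assume a: "z2 a" and b: "z2 b"
  { fix g assume g: "g \<in> carrier G"
    have "comm G g (a \<otimes> b) = comm G g a \<otimes> comm G g b"
      using comm_mult_right[OF g z2_carrier[OF a] z2_carrier[OF b] z2_cent[OF a g]] .
    hence "cent (comm G g (a \<otimes> b))" using cent_mult[OF z2_cent[OF a g] z2_cent[OF b g]] by simp }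
  thus ?thesis using z2_carrier[OF a] z2_carrier[OF b] unfolding z2_def by simp
qed

lemma z2_inv: "z2 a \<Longrightarrow> z2 (inv a)"
proof -
  assume a: "z2 a"
  { fix g assume g: "g \<in> carrier G"
    have "comm G g (inv a) = inv (comm G g a)"
      using comm_inv_right[OF g z2_carrier[OF a] z2_cent[OF a g]] .
    hence "cent (comm G g (inv a))" using cent_inv[OF z2_cent[OF a g]] by simp }
  thus ?thesis using z2_carrier[OF a] unfolding z2_def by simp
qed

lemma z2_s: "z2 a \<Longrightarrow> z2 (s a)"
proof -
  assume a: "z2 a"
  have "s a = inv (sig a)" using s_eq z2_carrier[OF a] by simp
  thus ?thesis using z2_inv[OF z2_sig[OF a]] by simp
qed

end



context invo begin

lemma yside:
  assumes a: "z2 a" and g0: "g0 \<in> carrier G" and ne: "comm G g0 a \<noteq> \<one>"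
    and tf: "\<And>x. x \<in> carrier G \<Longrightarrow> x [^] (4::nat) = \<one> \<Longrightarrow> x = \<one>"
  shows "\<exists>y. z2 y \<and> (s y = y \<or> s y = inv y) \<and> (\<exists>g\<in>carrier G. comm G g y \<noteq> \<one>)"
proof -
  have ac: "a \<in> carrier G" using z2_carrier[OF a] .
  define b where "b = sig a"
  have b: "z2 b" using z2_sig[OF a] b_def by simp
  have bc: "b \<in> carrier G" using z2_carrier[OF b] .
  define y1 where "y1 = a \<otimes> s a"
  define y2 where "y2 = a \<otimes> b \<otimes> b \<otimes> a"
  have sa: "s a = inv b" using b_def s_eq ac by simp
  have y1z: "z2 y1" unfolding y1_def sa using z2_mult[OF a z2_inv[OF b]] .
  have y2z: "z2 y2" unfolding y2_def using z2_mult[OF z2_mult[OF z2_mult[OF a b] b] a] .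
  have sy1: "s y1 = y1" unfolding y1_def using ac by (simp add: s_mult)
  define c where "c = comm G b a"
  have cc: "cent c" unfolding c_def using z2_cent[OF a bc] .
  have cC: "c \<in> carrier G" using cent_carrier[OF cc] .
  have ba: "b \<otimes> a = a \<otimes> b \<otimes> c"
    unfolding c_def comm_def using ac bc by (simp add: m_assoc)
  have e1: "y2 = a \<otimes> b \<otimes> a \<otimes> b \<otimes> c"
  proof -
    have "y2 = a \<otimes> b \<otimes> (b \<otimes> a)" unfolding y2_def using ac bc by (simp add: m_assoc)
    also have "\<dots> = a \<otimes> b \<otimes> a \<otimes> b \<otimes> c" unfolding ba using ac bc cC by (simp add: m_assoc)
    finally show ?thesis .
  qed
  have e2: "sig y2 = a \<otimes> b \<otimes> a \<otimes> b \<otimes> c"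
  proof -
    have "sig y2 = (b \<otimes> a) \<otimes> (a \<otimes> b)" unfolding y2_def b_def using ac by (simp add: sig_mult m_assoc)
    also have "\<dots> = a \<otimes> b \<otimes> (c \<otimes> (a \<otimes> b))" unfolding ba using ac bc cC by (simp add: m_assoc)
    also have "\<dots> = a \<otimes> b \<otimes> ((a \<otimes> b) \<otimes> c)" using cent_commute[OF cc, of "a \<otimes> b"] ac bc by simp
    also have "\<dots> = a \<otimes> b \<otimes> a \<otimes> b \<otimes> c" using ac bc cC by (simp add: m_assoc)
    finally show ?thesis .
  qed
  have y2c: "y2 \<in> carrier G" using z2_carrier[OF y2z] .
  have sy2: "s y2 = inv y2" using s_eq[OF y2c] e1 e2 by simp
  show ?thesis
  proof (cases "\<exists>g\<in>carrier G. comm G g y1 \<noteq> \<one>")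
    case True thus ?thesis using y1z sy1 by blast
  next
    case F1: False
    show ?thesis
    proof (cases "\<exists>g\<in>carrier G. comm G g y2 \<noteq> \<one>")
      case True thus ?thesis using y2z sy2 by blast
    next
      case False
      define c0 where "c0 = comm G g0 a"
      define cb where "cb = comm G g0 b"
      have c0c: "c0 \<in> carrier G" and cbc: "cb \<in> carrier G" using c0_def cb_def g0 ac bc by simp_all
      have "comm G g0 y1 = c0 \<otimes> inv cb"
        unfolding y1_def sa c0_def cb_def
        using comm_mult_right[OF g0 ac _ z2_cent[OF a g0], of "inv b"] comm_inv_right[OF g0 bc z2_cent[OF b g0]] bc
        by simp
      hence "c0 \<otimes> inv cb = \<one>" using F1 g0 by auto
      hence cb0: "cb = c0" using c0c cbc by (metis inv_solve_right' l_one one_closed)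
      have "comm G g0 y2 = c0 \<otimes> cb \<otimes> cb \<otimes> c0"
      proof -
        have ab: "z2 (a \<otimes> b)" using z2_mult[OF a b] .
        have abb: "z2 (a \<otimes> b \<otimes> b)" using z2_mult[OF ab b] .
        have "comm G g0 y2 = comm G g0 (a \<otimes> b \<otimes> b) \<otimes> c0"
          unfolding y2_def c0_def using comm_mult_right[OF g0 z2_carrier[OF abb] ac z2_cent[OF abb g0]] .
        also have "comm G g0 (a \<otimes> b \<otimes> b) = comm G g0 (a \<otimes> b) \<otimes> cb"
          unfolding cb_def using comm_mult_right[OF g0 z2_carrier[OF ab] bc z2_cent[OF ab g0]] .
        also have "comm G g0 (a \<otimes> b) = c0 \<otimes> cb"
          unfolding cb_def c0_def using comm_mult_right[OF g0 ac bc z2_cent[OF a g0]] .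
        finally show ?thesis .
      qed
      hence "c0 \<otimes> c0 \<otimes> c0 \<otimes> c0 = \<one>" using False g0 cb0 by auto
      hence "c0 [^] (4::nat) = \<one>" using c0c by (simp add: numeral_eq_Suc)
      hence "c0 = \<one>" using tf c0c by simp
      thus ?thesis using ne c0_def by simp
    qed
  qed
qed

end



context group begin

lemma lc_sub: "lower_central G k \<subseteq> carrier G"
proof (induction k)
  case 0 thus ?case by simp
next
  case (Suc k)
  have "{comm G g h | g h. g \<in> carrier G \<and> h \<in> lower_central G k} \<subseteq> carrier G"
    using Suc by auto
  thus ?case using generate_incl by simp
qed

lemma lc_comm: "g \<in> carrier G \<Longrightarrow> h \<in> lower_central G k \<Longrightarrow> comm G g h \<in> lower_central G (Suc k)"
  by (auto intro: generate.incl)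

lemma lc_comm_inv: "g \<in> carrier G \<Longrightarrow> h \<in> lower_central G k \<Longrightarrow> inv (comm G g h) \<in> lower_central G (Suc k)"
  by (auto intro: generate.inv)

lemma last_nontriv: "P 0 \<Longrightarrow> \<not> P n \<Longrightarrow> \<exists>m. P m \<and> \<not> P (Suc m)"
  by (induction n) auto

lemma gen_triv: "h \<in> generate G S \<Longrightarrow> S \<subseteq> {\<one>} \<Longrightarrow> h = \<one>"
  by (induction rule: generate.induct) auto

lemma find_z2:
  assumes nil: "lower_central G n = {\<one>}" and nc: "\<not> comm_group G"
  shows "\<exists>a g. a \<in> carrier G \<and> g \<in> carrier G \<and> comm G g a \<noteq> \<one> \<and>
                (\<forall>g'\<in>carrier G. \<forall>g''\<in>carrier G. g'' \<otimes> comm G g' a = comm G g' a \<otimes> g'')"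
proof -
  have l0: "lower_central G 0 \<noteq> {\<one>}"
  proof
    assume "lower_central G 0 = {\<one>}"
    hence "carrier G = {\<one>}" by simp
    hence "comm_group G" by (intro group_comm_groupI) auto
    thus False using nc by simp
  qed
  obtain m where m1: "lower_central G m \<noteq> {\<one>}" and m2: "lower_central G (Suc m) = {\<one>}"
  proof -
    have "\<exists>m. lower_central G m \<noteq> {\<one>} \<and> \<not> lower_central G (Suc m) \<noteq> {\<one>}"
      by (rule last_nontriv[of "\<lambda>k. lower_central G k \<noteq> {\<one>}", OF l0]) (use nil in blast)
    thus ?thesis using that by blast
  qed
  have centm: "\<And>h g. h \<in> lower_central G m \<Longrightarrow> g \<in> carrier G \<Longrightarrow> g \<otimes> h = h \<otimes> g"
  proof -
    fix h g assume h: "h \<in> lower_central G m" and g: "g \<in> carrier G"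
    have "comm G g h = \<one>" using lc_comm[OF g h] m2 by simp
    thus "g \<otimes> h = h \<otimes> g" using comm_one_iff g lc_sub h by blast
  qed
  show ?thesis
  proof (cases m)
    case 0
    hence "comm_group G" using centm by (intro group_comm_groupI) auto
    thus ?thesis using nc by simp
  next
    case (Suc k)
    have "\<exists>g h. g \<in> carrier G \<and> h \<in> lower_central G k \<and> comm G g h \<noteq> \<one>"
    proof (rule ccontr)
      assume "\<not> ?thesis"
      hence "{comm G g h | g h. g \<in> carrier G \<and> h \<in> lower_central G k} \<subseteq> {\<one>}" by auto
      hence "lower_central G m \<subseteq> {\<one>}" using Suc gen_triv by auto
      moreover have "\<one> \<in> lower_central G m" using Suc by (simp add: generate.one)
      ultimately show False using m1 by auto
    qed
    then obtain g h where g: "g \<in> carrier G" and h: "h \<in> lower_central G k" and ne: "comm G g h \<noteq> \<one>" by blast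
    have "\<forall>g'\<in>carrier G. \<forall>g''\<in>carrier G. g'' \<otimes> comm G g' h = comm G g' h \<otimes> g''"
    proof (intro ballI)
      fix g' g'' assume g': "g' \<in> carrier G" and g'': "g'' \<in> carrier G"
      have "comm G g' h \<in> lower_central G m" using lc_comm[OF g' h] Suc by simp
      thus "g'' \<otimes> comm G g' h = comm G g' h \<otimes> g''" using centm g'' by blast
    qed
    thus ?thesis using g h ne lc_sub by blast
  qed
qed

end

context invo begin

lemma iter_carrier: "g \<in> carrier G \<Longrightarrow> iter sig G g k \<in> carrier G"
  by (induction k) auto

lemma iter_lc: "g \<in> carrier G \<Longrightarrow> inv (iter sig G g k) \<otimes> sig (iter sig G g k) \<in> lower_central G k"
proof (induction k)
  case 0 thus ?case by simp
next
  case (Suc k)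
  define t where "t = iter sig G g k"
  have t: "t \<in> carrier G" using iter_carrier Suc t_def by simp
  have "inv (iter sig G g (Suc k)) \<otimes> sig (iter sig G g (Suc k)) = inv (comm G t (inv t \<otimes> sig t))"
    using t by (simp add: t_def[symmetric] sig_mult comm_def inv_mult_group m_assoc)
  thus ?case using lc_comm_inv[OF t] Suc t_def by simp
qed

end



context invo begin

lemma xside:
  assumes y: "z2 y" and sy: "s y = y \<or> s y = inv y" and g0: "g0 \<in> carrier G"
    and ne: "comm G g0 y \<noteq> \<one>" and nil: "lower_central G n = {\<one>}"
    and tf2: "\<And>x. x \<in> carrier G \<Longrightarrow> x \<otimes> x = \<one> \<Longrightarrow> x = \<one>"
  shows "\<exists>x\<in>carrier G. (s x = x \<or> s x = inv x) \<and> comm G x y \<noteq> \<one>"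
proof -
  have yc: "y \<in> carrier G" using z2_carrier[OF y] .
  define phi where "phi x = comm G x y" for x
  define tau where "tau z = (if sig y = y then sig z else inv (sig z))" for z
  have phic: "\<And>x. x \<in> carrier G \<Longrightarrow> cent (phi x)" unfolding phi_def using z2_cent[OF y] by simp
  have phiC: "\<And>x. x \<in> carrier G \<Longrightarrow> phi x \<in> carrier G" using phic cent_carrier by blast
  have sigy: "sig y \<noteq> y \<Longrightarrow> sig y = inv y" using sy yc by (auto simp: sig_def)
  have phi_mult: "\<And>x x'. x \<in> carrier G \<Longrightarrow> x' \<in> carrier G \<Longrightarrow> phi (x \<otimes> x') = phi x \<otimes> phi x'"
    unfolding phi_def using comm_mult_left yc z2_cent[OF y] by blast
  have phi_sig: "\<And>x. x \<in> carrier G \<Longrightarrow> phi (sig x) = tau (phi x)"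
  proof -
    fix x assume x: "x \<in> carrier G"
    have e: "sig (phi x) = comm G (sig x) (sig y)" unfolding phi_def using sig_comm x yc by simp
    show "phi (sig x) = tau (phi x)"
    proof (cases "sig y = y")
      case True thus ?thesis using e by (simp add: tau_def phi_def)
    next
      case False
      hence "sig (phi x) = inv (phi (sig x))"
        using e sigy comm_inv_right[OF sig_closed[OF x] yc z2_cent[OF y sig_closed[OF x]]]
        by (simp add: phi_def)
      thus ?thesis using False phiC x by (simp add: tau_def)
    qed
  qed
  have tau_cent: "\<And>z. cent z \<Longrightarrow> cent (tau z)" unfolding tau_def using cent_sig cent_inv by simp
  have tau_tau: "\<And>z. cent z \<Longrightarrow> tau (tau z) = z"
    unfolding tau_def using cent_carrier by (simp add: sig_inv)
  have tau_mult: "\<And>z w. cent z \<Longrightarrow> cent w \<Longrightarrow> tau (z \<otimes> w) = tau z \<otimes> tau w"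
  proof -
    fix z w assume z: "cent z" and w: "cent w"
    have zc: "z \<in> carrier G" and wc: "w \<in> carrier G" using z w cent_carrier by auto
    show "tau (z \<otimes> w) = tau z \<otimes> tau w"
    proof (cases "sig y = y")
      case True thus ?thesis using zc wc by (simp add: tau_def sig_mult)
    next
      case False
      have "inv (sig (z \<otimes> w)) = inv (sig w) \<otimes> inv (sig z)" using zc wc by (simp add: sig_mult inv_mult_group)
      also have "\<dots> = inv (sig z) \<otimes> inv (sig w)"
        using cent_commute[OF cent_inv[OF cent_sig[OF z]], of "inv (sig w)"] wc by simp
      finally show ?thesis using False by (simp add: tau_def)
    qed
  qed
  define z where "z = phi g0"
  have zcent: "cent z" using phic g0 z_def by simp
  have zc: "z \<in> carrier G" using cent_carrier[OF zcent] .
  have tzc: "tau z \<in> carrier G" using cent_carrier[OF tau_cent[OF zcent]] .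
  have zne: "z \<noteq> \<one>" using ne z_def phi_def by simp
  show ?thesis
  proof (cases "z \<otimes> tau z = \<one>")
    case False
    define w where "w k = phi (iter sig G g0 (Suc k))" for k
    have claim: "cent (w k) \<and> tau (w k) = w k \<and> w k \<noteq> \<one>" for k
    proof (induction k)
      case 0
      have "w 0 = z \<otimes> tau z" unfolding w_def z_def using g0 by (simp add: phi_mult phi_sig)
      moreover have "tau (z \<otimes> tau z) = z \<otimes> tau z"
        using tau_mult[OF zcent tau_cent[OF zcent]] tau_tau[OF zcent] cent_commute[OF zcent tzc] by simp
      ultimately show ?case using False cent_mult[OF zcent tau_cent[OF zcent]] by simp
    next
      case (Suc k)
      have t: "iter sig G g0 (Suc k) \<in> carrier G" using iter_carrier g0 by blast
      have "w (Suc k) = w k \<otimes> tau (w k)" unfolding w_def using t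
        by (simp only: iter.simps(2)[of sig G g0 "Suc k"] phi_mult sig_closed phi_sig)
      hence e: "w (Suc k) = w k \<otimes> w k" using Suc by simp
      have wc: "w k \<in> carrier G" using Suc cent_carrier by blast
      show ?case using e Suc tau_mult[of "w k" "w k"] cent_mult[of "w k" "w k"] tf2[OF wc] by auto
    qed
    show ?thesis
    proof (cases n)
      case 0
      hence "g0 = \<one>" using nil g0 by simp
      hence "comm G g0 y = \<one>" using yc by (simp add: comm_def)
      thus ?thesis using ne by simp
    next
      case (Suc m)
      define t where "t = iter sig G g0 (Suc m)"
      have tc: "t \<in> carrier G" using iter_carrier g0 t_def by blast
      have "inv t \<otimes> sig t = \<one>" using iter_lc[OF g0, of "Suc m"] nil Suc t_def by simp
      hence "sig t = t" using tc by (metis inv_solve_left' r_one one_closed sig_closed)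
      hence "s t = inv t" using s_eq[OF tc] by simp
      moreover have "comm G t y \<noteq> \<one>" using claim[of m] t_def w_def phi_def by simp
      ultimately show ?thesis using tc by blast
    qed
  next
    case True
    define x where "x = g0 \<otimes> s g0"
    have xc: "x \<in> carrier G" using g0 x_def by simp
    have sx: "s x = x" using g0 x_def by (simp add: s_mult)
    have phi_inv: "\<And>u. u \<in> carrier G \<Longrightarrow> phi (inv u) = inv (phi u)"
    proof -
      fix u assume u: "u \<in> carrier G"
      have "phi u \<otimes> phi (inv u) = \<one>" using phi_mult[of u "inv u"] u yc by (simp add: phi_def comm_def)
      thus "phi (inv u) = inv (phi u)" using prod_one_inv[OF phiC[OF u] phiC[OF inv_closed[OF u]]] by simp
    qed
    have "phi x = phi g0 \<otimes> phi (inv (sig g0))" unfolding x_def using g0 s_eq[OF g0] phi_mult[of g0 "inv (sig g0)"] by simp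
    also have "\<dots> = z \<otimes> inv (tau z)" using phi_inv[of "sig g0"] phi_sig[OF g0] g0 z_def by simp
    finally have "phi x = z \<otimes> inv (tau z)" .
    moreover have "z \<otimes> inv (tau z) \<noteq> \<one>"
    proof
      assume "z \<otimes> inv (tau z) = \<one>"
      hence "inv (tau z) = inv z" using prod_one_inv[OF zc inv_closed[OF tzc]] by simp
      hence "inv (inv (tau z)) = inv (inv z)" by simp
      hence "tau z = z" using zc tzc by simp
      hence "z \<otimes> z = \<one>" using True by simp
      thus False using tf2[OF zc] zne by blast
    qed
    ultimately have "comm G x y \<noteq> \<one>" unfolding phi_def by simp
    thus ?thesis using xc sx by blast
  qed
qed

end



theorem proposition2p4:
  fixes G (structure) and s :: "'a \<Rightarrow> 'a"
  assumes "group G"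
    and "nilpotent_group G"
    and "torsion_free_group G"
    and "\<not> comm_group G"
    and "involution G s"
  shows "\<exists>x \<in> carrier G. \<exists>y \<in> carrier G.
           comm G x y \<noteq> \<one> \<and>
           comm G x (comm G x y) = \<one> \<and>
           comm G y (comm G x y) = \<one> \<and>
           s x \<in> {x, inv x} \<and> s y \<in> {y, inv y}"
proof -
  interpret invo G s
    using assms(1,5) unfolding involution_def invo_def invo_axioms_def by auto
  obtain n where nil: "lower_central G n = {\<one>}" using assms(2) unfolding nilpotent_group_def by blast
  have tf: "\<And>x k. x \<in> carrier G \<Longrightarrow> (k::nat) > 0 \<Longrightarrow> x [^] k = \<one> \<Longrightarrow> x = \<one>"
    using assms(3) unfolding torsion_free_group_def by blast
  have tf4: "\<And>x. x \<in> carrier G \<Longrightarrow> x [^] (4::nat) = \<one> \<Longrightarrow> x = \<one>"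
    using tf[of _ "4::nat"] by simp
  have tf2: "\<And>x. x \<in> carrier G \<Longrightarrow> x \<otimes> x = \<one> \<Longrightarrow> x = \<one>"
  proof -
    fix x assume x: "x \<in> carrier G" and e: "x \<otimes> x = \<one>"
    have "x [^] (2::nat) = \<one>" using x e by (simp add: numeral_eq_Suc)
    thus "x = \<one>" using tf[OF x, of 2] by simp
  qed
  obtain a g where a: "a \<in> carrier G" and g: "g \<in> carrier G" and ne: "comm G g a \<noteq> \<one>"
    and ca: "\<forall>g'\<in>carrier G. \<forall>g''\<in>carrier G. g'' \<otimes> comm G g' a = comm G g' a \<otimes> g''"
    using find_z2[OF nil assms(4)] by blast
  have za: "z2 a" using a ca unfolding z2_def cent_def by simp
  obtain y g1 where y: "z2 y" and sy: "s y = y \<or> s y = inv y" and g1: "g1 \<in> carrier G"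
    and ne1: "comm G g1 y \<noteq> \<one>"
    using yside[OF za g ne tf4] by blast
  obtain x where x: "x \<in> carrier G" and sx: "s x = x \<or> s x = inv x" and ne2: "comm G x y \<noteq> \<one>"
    using xside[OF y sy g1 ne1 nil tf2] by blast
  have yc: "y \<in> carrier G" using z2_carrier[OF y] .
  have cc: "cent (comm G x y)" using z2_cent[OF y x] .
  show ?thesis
    using x yc ne2 cent_comm_one[OF cc x] cent_comm_one[OF cc yc] sx sy by blast
qed


end
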